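(* Let $u\equiv 7,11\pmod{12}$. Then $\Phi(u\times 2,4,2)\le\left\lfloor\frac{u}{4}\left\lfloor\frac{2u-1}{3}\left\lfloor\frac{2u-2}{2}\right\rfloor\right\rfloor\right\rfloor-1$.
   Context: A 2-D $(u\times v,4,2)$-OOC is a family $\mathcal C$ of $u\times v$ $(0,1)$-matrices of Hamming weight $4$ such that for all $A=(a_{ij}),B=(b_{ij})\in\mathcal C$ and integers $r$ with $A\ne B$ or $r\not\equiv0\pmod v$, $\sum_{i,j}a_{ij}b_{i,j+r}\le 2$ (column indices mod $v$). $\Phi(u\times v,4,2)$ is the largest size of such a code. *)

theory Defs
  imports Complex_Main
begin

definition zo_matrices :: "nat \<Rightarrow> nat \<Rightarrow> (nat \<times> nat \<Rightarrow> nat) set" where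
  "zo_matrices u v = {A. (\<forall>i j. A (i, j) \<in> {0, 1}) \<and>
                          (\<forall>i j. \<not> (i < u \<and> j < v) \<longrightarrow> A (i, j) = 0)}"

definition hamming_weight :: "nat \<Rightarrow> nat \<Rightarrow> (nat \<times> nat \<Rightarrow> nat) \<Rightarrow> nat" where
  "hamming_weight u v A = (\<Sum>i<u. \<Sum>j<v. A (i, j))"

definition corr :: "nat \<Rightarrow> nat \<Rightarrow> (nat \<times> nat \<Rightarrow> nat) \<Rightarrow> (nat \<times> nat \<Rightarrow> nat) \<Rightarrow> int \<Rightarrow> nat" where
  "corr u v A B r = (\<Sum>i<u. \<Sum>j<v. A (i, j) * B (i, nat ((int j + r) mod int v)))"

definition is_2D_OOC :: "nat \<Rightarrow> nat \<Rightarrow> nat \<Rightarrow> nat \<Rightarrow> (nat \<times> nat \<Rightarrow> nat) set \<Rightarrow> bool" where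
  "is_2D_OOC u v w lam C \<longleftrightarrow>
     C \<subseteq> zo_matrices u v \<and> (\<forall>A\<in>C. hamming_weight u v A = w) \<and>
     (\<forall>A\<in>C. \<forall>B\<in>C. \<forall>r::int. (A \<noteq> B \<or> r mod int v \<noteq> 0) \<longrightarrow> corr u v A B r \<le> lam)"

definition Phi :: "nat \<Rightarrow> nat \<Rightarrow> nat \<Rightarrow> nat \<Rightarrow> nat" where
  "Phi u v w lam = Max {card C | C. is_2D_OOC u v w lam C}"

end

theory Submission
  imports Defs
begin

lemma "(4::nat) choose 3 = 4" using binomial_Suc_n[of 3] by (simp add: numeral_eq_Suc)
lemma "(3::nat) choose 2 = 3" using binomial_Suc_n[of 2] by (simp add: numeral_eq_Suc)
lemma "(2::nat) choose 1 = 2" by simp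
lemma choose2': "2 * ((n + 2) choose 2) = (n + 2) * (n + 1)"
proof -
  have "(n + 2) choose 2 = (n + 2) * (n + 1) div 2" by (simp add: choose_two)
  moreover have "even ((n + 2) * (n + 1))" by simp
  ultimately show ?thesis by simp
qed
lemma choose3': "6 * ((n + 2) choose 3) = (n + 2) * (n + 1) * n"
proof (induction n)
  case 0 then show ?case by (simp add: numeral_eq_Suc)
next
  case (Suc n)
  have "(Suc n + 2) choose 3 = ((n + 2) choose 2) + ((n + 2) choose 3)" by (simp add: numeral_eq_Suc)
  then have "6 * ((Suc n + 2) choose 3) = 3 * (2 * ((n + 2) choose 2)) + 6 * ((n + 2) choose 3)" by simp
  also have "\<dots> = 3 * ((n + 2) * (n + 1)) + (n + 2) * (n + 1) * n" using Suc choose2'[of n] by simp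
  finally show ?case by (simp add: algebra_simps)
qed



lemma sub_count:
  assumes "finite X" "Q \<subseteq> X" "card Q \<le> 3"
  shows "card {t. t \<subseteq> X \<and> card t = 3 \<and> Q \<subseteq> t} = (card X - card Q) choose (3 - card Q)"
proof -
  have fQ: "finite Q" using assms finite_subset by blast
  have "bij_betw (\<lambda>t. t - Q) {t. t \<subseteq> X \<and> card t = 3 \<and> Q \<subseteq> t} {s. s \<subseteq> X - Q \<and> card s = 3 - card Q}"
  proof (rule bij_betw_byWitness[where f'="\<lambda>s. s \<union> Q"])
    show "\<forall>a\<in>{t. t \<subseteq> X \<and> card t = 3 \<and> Q \<subseteq> t}. a - Q \<union> Q = a" by auto
    show "\<forall>a\<in>{s. s \<subseteq> X - Q \<and> card s = 3 - card Q}. a \<union> Q - Q = a" by auto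
    show "(\<lambda>t. t - Q) ` {t. t \<subseteq> X \<and> card t = 3 \<and> Q \<subseteq> t} \<subseteq> {s. s \<subseteq> X - Q \<and> card s = 3 - card Q}"
      using fQ by (auto simp: card_Diff_subset)
    show "(\<lambda>s. s \<union> Q) ` {s. s \<subseteq> X - Q \<and> card s = 3 - card Q} \<subseteq> {t. t \<subseteq> X \<and> card t = 3 \<and> Q \<subseteq> t}"
    proof (rule image_subsetI)
      fix s assume "s \<in> {s. s \<subseteq> X - Q \<and> card s = 3 - card Q}"
      then have s: "s \<subseteq> X - Q" "card s = 3 - card Q" by auto
      have "finite s" using s assms(1) finite_subset by blast
      moreover have "s \<inter> Q = {}" using s by auto
      ultimately have "card (s \<union> Q) = card s + card Q" using fQ card_Un_disjoint by blast
      then show "s \<union> Q \<in> {t. t \<subseteq> X \<and> card t = 3 \<and> Q \<subseteq> t}" using s assms by auto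
    qed
  qed
  then have "card {t. t \<subseteq> X \<and> card t = 3 \<and> Q \<subseteq> t} = card {s. s \<subseteq> X - Q \<and> card s = 3 - card Q}"
    by (rule bij_betw_same_card)
  also have "\<dots> = card (X - Q) choose (3 - card Q)" using assms by (simp add: n_subsets)
  also have "card (X - Q) = card X - card Q" using fQ assms by (simp add: card_Diff_subset)
  finally show ?thesis .
qed

lemma core_count:
  fixes G :: "'p set" and I :: "'i set" and Bk :: "'i \<Rightarrow> 'p set"
  assumes fG: "finite G" and fI: "finite I"
    and Bk: "\<And>i. i \<in> I \<Longrightarrow> Bk i \<subseteq> G \<and> card (Bk i) = 4"
    and inter: "\<And>i j. i \<in> I \<Longrightarrow> j \<in> I \<Longrightarrow> i \<noteq> j \<Longrightarrow> card (Bk i \<inter> Bk j) \<le> 2"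
    and Q: "Q \<subseteq> G" "card Q \<le> 2"
  shows "card {t \<in> {t. t \<subseteq> G \<and> card t = 3} - (\<Union>i\<in>I. {t. t \<subseteq> Bk i \<and> card t = 3}). Q \<subseteq> t}
     = ((card G - card Q) choose (3 - card Q)) - (4 - card Q) * card {i\<in>I. Q \<subseteq> Bk i}
     \<and> (4 - card Q) * card {i\<in>I. Q \<subseteq> Bk i} \<le> (card G - card Q) choose (3 - card Q)"
proof -
  let ?J = "{i\<in>I. Q \<subseteq> Bk i}"
  let ?F = "\<lambda>i. {t. t \<subseteq> Bk i \<and> card t = 3 \<and> Q \<subseteq> t}"
  have fB: "\<And>i. i \<in> I \<Longrightarrow> finite (Bk i)" using Bk fG finite_subset by blast
  have eq1: "{t \<in> {t. t \<subseteq> G \<and> card t = 3} - (\<Union>i\<in>I. {t. t \<subseteq> Bk i \<and> card t = 3}). Q \<subseteq> t}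
     = {t. t \<subseteq> G \<and> card t = 3 \<and> Q \<subseteq> t} - (\<Union>i\<in>?J. ?F i)"
  proof (intro set_eqI iffI)
    fix t assume "t \<in> {t \<in> {t. t \<subseteq> G \<and> card t = 3} - (\<Union>i\<in>I. {t. t \<subseteq> Bk i \<and> card t = 3}). Q \<subseteq> t}"
    then show "t \<in> {t. t \<subseteq> G \<and> card t = 3 \<and> Q \<subseteq> t} - (\<Union>i\<in>?J. ?F i)" by auto
  next
    fix t assume "t \<in> {t. t \<subseteq> G \<and> card t = 3 \<and> Q \<subseteq> t} - (\<Union>i\<in>?J. ?F i)"
    then have t: "t \<subseteq> G" "card t = 3" "Q \<subseteq> t" and nt: "\<And>i. i \<in> ?J \<Longrightarrow> t \<notin> ?F i" by auto
    have "t \<notin> {t. t \<subseteq> Bk i \<and> card t = 3}" if "i \<in> I" for i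
    proof
      assume "t \<in> {t. t \<subseteq> Bk i \<and> card t = 3}"
      then have "t \<subseteq> Bk i" by simp
      have "Q \<subseteq> Bk i" using t(3) \<open>t \<subseteq> Bk i\<close> by (rule subset_trans)
      then have "i \<in> ?J" using that by simp
      with nt[OF this] t \<open>t \<subseteq> Bk i\<close> show False by simp
    qed
    then have "t \<notin> (\<Union>i\<in>I. {t. t \<subseteq> Bk i \<and> card t = 3})" by (simp only: UN_iff) blast
    then show "t \<in> {t \<in> {t. t \<subseteq> G \<and> card t = 3} - (\<Union>i\<in>I. {t. t \<subseteq> Bk i \<and> card t = 3}). Q \<subseteq> t}"
      using t by simp
  qed
  have sub: "(\<Union>i\<in>?J. ?F i) \<subseteq> {t. t \<subseteq> G \<and> card t = 3 \<and> Q \<subseteq> t}" using Bk by blast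
  have fin2: "finite {t. t \<subseteq> G \<and> card t = 3 \<and> Q \<subseteq> t}" by (rule finite_subset[of _ "Pow G"]) (use fG in auto)
  have cF: "card (?F i) = 4 - card Q" if "i \<in> ?J" for i
  proof -
    have i: "i \<in> I" "Q \<subseteq> Bk i" using that by auto
    have "card (?F i) = (card (Bk i) - card Q) choose (3 - card Q)"
      by (rule sub_count[OF fB[OF i(1)] i(2)]) (use Q(2) in simp)
    also have "card (Bk i) = 4" using Bk[OF i(1)] by simp
    also have "(4 - card Q) choose (3 - card Q) = 4 - card Q"
    proof -
      have "card Q = 0 \<or> card Q = 1 \<or> card Q = 2" using Q(2) by arith
      moreover have "(4::nat) choose 3 = 4" using binomial_Suc_n[of 3] by (simp add: numeral_eq_Suc)
      moreover have "(3::nat) choose 2 = 3" using binomial_Suc_n[of 2] by (simp add: numeral_eq_Suc)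
      ultimately show ?thesis by auto
    qed
    finally show ?thesis .
  qed
  have "card (\<Union>i\<in>?J. ?F i) = (\<Sum>i\<in>?J. card (?F i))"
  proof (rule card_UN_disjoint)
    show "finite ?J" using fI by simp
    show "\<forall>i\<in>?J. finite (?F i)" 
    proof
      fix i assume "i \<in> ?J"
      then have "finite (Bk i)" using fB by simp
      then have "finite (Pow (Bk i))" by simp
      moreover have "?F i \<subseteq> Pow (Bk i)" by auto
      ultimately show "finite (?F i)" using finite_subset by blast
    qed
    show "\<forall>i\<in>?J. \<forall>j\<in>?J. i \<noteq> j \<longrightarrow> ?F i \<inter> ?F j = {}"
    proof (intro ballI impI)
      fix i j assume ij: "i \<in> ?J" "j \<in> ?J" "i \<noteq> j"
      show "?F i \<inter> ?F j = {}"
      proof (rule ccontr)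
        assume "?F i \<inter> ?F j \<noteq> {}"
        then obtain t where "t \<in> ?F i \<inter> ?F j" by (meson ex_in_conv)
        then have t: "t \<subseteq> Bk i \<inter> Bk j" "card t = 3" by simp_all
        have ii: "i \<in> I" "j \<in> I" using ij by simp_all
        have "finite (Bk i \<inter> Bk j)" using fB[OF ii(1)] by simp
        then have "card t \<le> card (Bk i \<inter> Bk j)" using t(1) by (rule card_mono)
        with inter[OF ii ij(3)] t(2) show False by simp
      qed
    qed
  qed
  also have "\<dots> = (4 - card Q) * card ?J" using cF by simp
  finally have c3: "card (\<Union>i\<in>?J. ?F i) = (4 - card Q) * card ?J" .
  have "card ({t. t \<subseteq> G \<and> card t = 3 \<and> Q \<subseteq> t} - (\<Union>i\<in>?J. ?F i))
       = card {t. t \<subseteq> G \<and> card t = 3 \<and> Q \<subseteq> t} - card (\<Union>i\<in>?J. ?F i)"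
    using sub fin2 by (intro card_Diff_subset) (rule finite_subset[OF sub fin2], rule sub)
  also have "card {t. t \<subseteq> G \<and> card t = 3 \<and> Q \<subseteq> t} = (card G - card Q) choose (3 - card Q)"
    using sub_count[OF fG Q(1)] Q by simp
  finally have c4: "card ({t. t \<subseteq> G \<and> card t = 3 \<and> Q \<subseteq> t} - (\<Union>i\<in>?J. ?F i))
       = ((card G - card Q) choose (3 - card Q)) - card (\<Union>i\<in>?J. ?F i)" .
  have le: "(4 - card Q) * card ?J \<le> (card G - card Q) choose (3 - card Q)"
    using card_mono[OF fin2 sub] c3 sub_count[OF fG Q(1)] Q by simp
  have "card {t \<in> {t. t \<subseteq> G \<and> card t = 3} - (\<Union>i\<in>I. {t. t \<subseteq> Bk i \<and> card t = 3}). Q \<subseteq> t}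
     = ((card G - card Q) choose (3 - card Q)) - (4 - card Q) * card ?J" unfolding eq1 c4 c3 ..
  then show ?thesis using le by (rule conjI)
qed




lemma no4:
  fixes L :: "'p set set" and \<sigma> :: "'p \<Rightarrow> 'p"
  assumes cL: "card L = 4" and c3: "\<And>t. t \<in> L \<Longrightarrow> card t = 3"
    and inv: "\<And>t. t \<in> L \<Longrightarrow> \<sigma> ` t \<in> L"
    and nfix: "\<And>t x. t \<in> L \<Longrightarrow> x \<in> t \<Longrightarrow> \<sigma> x \<noteq> x"
    and invol: "\<And>t x. t \<in> L \<Longrightarrow> x \<in> t \<Longrightarrow> \<sigma> (\<sigma> x) = x"
    and pt: "\<And>t x. t \<in> L \<Longrightarrow> x \<in> t \<Longrightarrow> 3 dvd card {t'\<in>L. x \<in> t'}"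
    and vp: "\<And>t x. t \<in> L \<Longrightarrow> x \<in> t \<Longrightarrow> \<sigma> x \<in> t \<Longrightarrow> 4 dvd card {t'\<in>L. {x, \<sigma> x} \<subseteq> t'}"
  shows False
proof -
  have fin: "finite L" using cL by (metis card.infinite zero_neq_numeral)
  obtain t where t: "t \<in> L" using cL by fastforce
  have ft: "\<And>t. t \<in> L \<Longrightarrow> finite t" using c3 by (metis card.infinite zero_neq_numeral)
  show False
  proof (cases "\<exists>x\<in>t. \<sigma> x \<in> t")
    case True
    then obtain x where x: "x \<in> t" "\<sigma> x \<in> t" by blast
    define Q where "Q = {x, \<sigma> x}"
    have sub: "{t'\<in>L. Q \<subseteq> t'} \<subseteq> L" by blast
    have tin: "t \<in> {t'\<in>L. Q \<subseteq> t'}" using t x Q_def by blast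
    have "card {t'\<in>L. Q \<subseteq> t'} \<noteq> 0" using tin fin by auto
    moreover have "4 dvd card {t'\<in>L. Q \<subseteq> t'}" using vp[OF t x] Q_def by simp
    ultimately have "card {t'\<in>L. Q \<subseteq> t'} \<ge> 4" by (simp add: dvd_imp_le)
    moreover have "card {t'\<in>L. Q \<subseteq> t'} \<le> card L" by (rule card_mono[OF fin sub])
    ultimately have eq: "{t'\<in>L. Q \<subseteq> t'} = L" using fin sub cL by (intro card_subset_eq) auto
    have cQ: "card Q = 2" using nfix[OF t x(1)] Q_def by simp
    have "\<not> t \<subseteq> Q"
    proof
      assume "t \<subseteq> Q"
      then have "card t \<le> card Q" using Q_def by (intro card_mono) auto
      with cQ c3[OF t] show False by simp
    qed
    then obtain z where z: "z \<in> t" "z \<notin> Q" by blast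
    have key: "t' = insert z Q" if "t' \<in> L" "z \<in> t'" for t'
    proof -
      have "Q \<subseteq> t'" using eq that by blast
      then have s: "insert z Q \<subseteq> t'" using that by blast
      have "card (insert z Q) = 3" using cQ z Q_def by simp
      then show ?thesis using s ft[OF that(1)] c3[OF that(1)] by (intro card_subset_eq[symmetric]) auto
    qed
    have "{t'\<in>L. z \<in> t'} = {t}"
    proof
      show "{t'\<in>L. z \<in> t'} \<subseteq> {t}" using key t z by blast
      show "{t} \<subseteq> {t'\<in>L. z \<in> t'}" using t z by blast
    qed
    with pt[OF t z(1)] show False by simp
  next
    case False
    define s where "s = \<sigma> ` t"
    have s: "s \<in> L" using inv[OF t] s_def by simp
    have nots: "x \<notin> s" if "x \<in> t" for x
    proof
      assume "x \<in> s"
      then obtain w where w: "w \<in> t" "x = \<sigma> w" using s_def by blast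
      then have "\<sigma> x = w" using invol[OF t w(1)] by simp
      with w(1) that False show False by blast
    qed
    have cR: "card (L - {s}) = 3" using cL s fin by simp
    have fR: "finite (L - {s})" using fin by simp
    have all: "{t'\<in>L. x \<in> t'} = L - {s}" if "x \<in> t" for x
    proof -
      have sub: "{t'\<in>L. x \<in> t'} \<subseteq> L - {s}" using nots[OF that] by blast
      have "t \<in> {t'\<in>L. x \<in> t'}" using t that by blast
      then have "card {t'\<in>L. x \<in> t'} \<noteq> 0" using fin by auto
      with pt[OF t that] have "card {t'\<in>L. x \<in> t'} \<ge> 3" by (simp add: dvd_imp_le)
      moreover have "card {t'\<in>L. x \<in> t'} \<le> 3" using card_mono[OF fR sub] cR by simp
      ultimately show ?thesis using sub fR cR by (intro card_subset_eq) auto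
    qed
    have "L - {s} \<subseteq> {t}"
    proof
      fix t' assume t': "t' \<in> L - {s}"
      have "t \<subseteq> t'" using all t' by blast
      then have "t = t'" using t' ft c3 t by (intro card_subset_eq) auto
      then show "t' \<in> {t}" by simp
    qed
    then have "card (L - {s}) \<le> 1" using card_mono[of "{t}" "L - {s}"] by simp
    with cR show False by simp
  qed
qed




lemma arith_facts:
  fixes u :: nat
  assumes "u mod 12 = 7 \<or> u mod 12 = 11"
  shows "\<exists>P. (2*u) choose 3 = 4*P \<and> odd P \<and> 3 dvd ((2*u-1) choose 2) \<and> 4 dvd (2*u-2) \<and>
     real u / 4 * \<lfloor>(2 * real u - 1) / 3 * \<lfloor>(2 * real u - 2) / 2\<rfloor>\<rfloor> = real P / 2"
  using assms
proof
  assume h: "u mod 12 = 7"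
  define m where "m = u div 12"
  have u: "u = 12*m + 7" using h unfolding m_def by presburger
  define P where "P = (12*m+7)*(2*m+1)*(24*m+13)"
  have "6 * ((2*u) choose 3) = 6 * (4*P)"
  proof -
    have "2*u = (24*m+12) + 2" using u by simp
    then have "6 * ((2*u) choose 3) = (24*m+12+2)*(24*m+12+1)*(24*m+12)" using choose3'[of "24*m+12"] by simp
    also have "\<dots> = 6*(4*P)" unfolding P_def by (simp add: algebra_simps)
    finally show ?thesis .
  qed
  then have T: "(2*u) choose 3 = 4*P" by simp
  have oP: "odd P" unfolding P_def by simp
  have "2 * ((2*u-1) choose 2) = 2 * (3*((24*m+13)*(4*m+2)))"
  proof -
    have "2*u-1 = (24*m+11) + 2" using u by simp
    then have "2 * ((2*u-1) choose 2) = (24*m+11+2)*(24*m+11+1)" using choose2'[of "24*m+11"] by simp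
    also have "\<dots> = 2 * (3*((24*m+13)*(4*m+2)))" by (simp add: algebra_simps)
    finally show ?thesis .
  qed
  then have d3: "3 dvd ((2*u-1) choose 2)" by (metis dvd_triv_left mult_left_cancel zero_neq_numeral)
  have d4: "4 dvd (2*u-2)" using u by presburger
  have f1: "\<lfloor>(2 * real u - 2) / 2\<rfloor> = int (12*m+6)"
  proof -
    have e: "(2 * real u - 2) / 2 = real (12*m+6)" using u by simp
    show ?thesis unfolding e by (rule floor_of_nat)
  qed
  have f2: "\<lfloor>(2 * real u - 1) / 3 * \<lfloor>(2 * real u - 2) / 2\<rfloor>\<rfloor> = int ((24*m+13)*(4*m+2))"
  proof -
    have "(2 * real u - 1) / 3 * real_of_int (int (12*m+6)) = real ((24*m+13)*(4*m+2))" using u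
      by (simp add: field_simps)
    then show ?thesis unfolding f1 by (metis floor_of_nat of_int_of_nat_eq)
  qed
  have "real u / 4 * \<lfloor>(2 * real u - 1) / 3 * \<lfloor>(2 * real u - 2) / 2\<rfloor>\<rfloor> = real P / 2"
    unfolding f2 P_def using u by (simp add: field_simps)
  then show ?thesis using T oP d3 d4 by blast
next
  assume h: "u mod 12 = 11"
  define m where "m = u div 12"
  have u: "u = 12*m + 11" using h unfolding m_def by presburger
  define P where "P = (12*m+11)*(8*m+7)*(6*m+5)"
  have "6 * ((2*u) choose 3) = 6 * (4*P)"
  proof -
    have "2*u = (24*m+20) + 2" using u by simp
    then have "6 * ((2*u) choose 3) = (24*m+20+2)*(24*m+20+1)*(24*m+20)" using choose3'[of "24*m+20"] by simp
    also have "\<dots> = 6*(4*P)" unfolding P_def by (simp add: algebra_simps)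
    finally show ?thesis .
  qed
  then have T: "(2*u) choose 3 = 4*P" by simp
  have oP: "odd P" unfolding P_def by simp
  have "2 * ((2*u-1) choose 2) = 2 * (3*((8*m+7)*(12*m+10)))"
  proof -
    have "2*u-1 = (24*m+19) + 2" using u by simp
    then have "2 * ((2*u-1) choose 2) = (24*m+19+2)*(24*m+19+1)" using choose2'[of "24*m+19"] by simp
    also have "\<dots> = 2 * (3*((8*m+7)*(12*m+10)))" by (simp add: algebra_simps)
    finally show ?thesis .
  qed
  then have d3: "3 dvd ((2*u-1) choose 2)" by (metis dvd_triv_left mult_left_cancel zero_neq_numeral)
  have d4: "4 dvd (2*u-2)" using u by presburger
  have f1: "\<lfloor>(2 * real u - 2) / 2\<rfloor> = int (12*m+10)"
  proof -
    have e: "(2 * real u - 2) / 2 = real (12*m+10)" using u by simp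
    show ?thesis unfolding e by (rule floor_of_nat)
  qed
  have f2: "\<lfloor>(2 * real u - 1) / 3 * \<lfloor>(2 * real u - 2) / 2\<rfloor>\<rfloor> = int ((8*m+7)*(12*m+10))"
  proof -
    have "(2 * real u - 1) / 3 * real_of_int (int (12*m+10)) = real ((8*m+7)*(12*m+10))" using u
      by (simp add: field_simps)
    then show ?thesis unfolding f1 by (metis floor_of_nat of_int_of_nat_eq)
  qed
  have "real u / 4 * \<lfloor>(2 * real u - 1) / 3 * \<lfloor>(2 * real u - 2) / 2\<rfloor>\<rfloor> = real P / 2"
    unfolding f2 P_def using u by (simp add: field_simps)
  then show ?thesis using T oP d3 d4 by blast
qed



definition blk :: "nat \<Rightarrow> (nat \<times> nat \<Rightarrow> nat) \<Rightarrow> nat \<Rightarrow> (nat \<times> nat) set" where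
  "blk u A b = {p. fst p < u \<and> snd p < 2 \<and> A (fst p, (snd p + b) mod 2) = 1}"

definition sg :: "nat \<times> nat \<Rightarrow> nat \<times> nat" where "sg p = (fst p, (snd p + 1) mod 2)"

lemma grid_card:
  fixes u :: nat and f :: "nat \<times> nat \<Rightarrow> nat"
  assumes "\<And>p. f p = 0 \<or> f p = 1"
  shows "(\<Sum>i<u. \<Sum>j<(2::nat). f (i, j)) = card {p. fst p < u \<and> snd p < 2 \<and> f p = 1}"
proof -
  have "(\<Sum>i<u. \<Sum>j<(2::nat). f (i, j)) = (\<Sum>p\<in>{..<u} \<times> {..<2}. f p)"
    by (simp add: sum.cartesian_product)
  also have "\<dots> = (\<Sum>p\<in>{..<u} \<times> {..<2}. if p \<in> {p. f p = 1} then 1 else 0)"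
    by (rule sum.cong) (use assms in auto)
  also have "\<dots> = (\<Sum>p\<in>{..<u} \<times> {..<2} \<inter> {p. f p = 1}. 1)"
    by (rule sum.inter_restrict[symmetric]) simp
  also have "\<dots> = card ({..<u} \<times> {..<2} \<inter> {p. f p = 1})" by simp
  also have "{..<u} \<times> {..<2} \<inter> {p. f p = 1} = {p. fst p < u \<and> snd p < 2 \<and> f p = 1}" by auto
  finally show ?thesis .
qed

lemma zo_vals: "A \<in> zo_matrices u v \<Longrightarrow> A p = 0 \<or> A p = 1"
  unfolding zo_matrices_def by (cases p) auto

lemma card_blk:
  assumes A: "A \<in> zo_matrices u 2" and b: "b < 2"
  shows "card (blk u A b) = hamming_weight u 2 A"
proof -
  have "card (blk u A b) = (\<Sum>i<u. \<Sum>j<(2::nat). A (i, (j + b) mod 2))"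
    unfolding blk_def using grid_card[of "\<lambda>p. A (fst p, (snd p + b) mod 2)" u] zo_vals[OF A] by simp
  also have "\<dots> = (\<Sum>i<u. \<Sum>j<(2::nat). A (i, j))"
    using b by (cases b) (auto simp: numeral_2_eq_2 ac_simps)
  finally show ?thesis unfolding hamming_weight_def .
qed

lemma card_blk_inter:
  assumes A: "A \<in> zo_matrices u 2" and A': "A' \<in> zo_matrices u 2" and b: "b < 2" and b': "b' < 2"
  shows "card (blk u A b \<inter> blk u A' b') = corr u 2 A A' (int b' - int b)"
proof -
  let ?f = "\<lambda>p. A (fst p, (snd p + b) mod 2) * A' (fst p, (snd p + b') mod 2)"
  have v: "?f p = 0 \<or> ?f p = 1" for p using zo_vals[OF A] zo_vals[OF A'] by (metis mult_0 mult_1 mult_0_right)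
  have "blk u A b \<inter> blk u A' b' = {p. fst p < u \<and> snd p < 2 \<and> ?f p = 1}"
    unfolding blk_def by auto
  then have "card (blk u A b \<inter> blk u A' b') = (\<Sum>i<u. \<Sum>j<(2::nat). ?f (i, j))"
    using grid_card[of ?f u, OF v] by simp
  also have "\<dots> = (\<Sum>i<u. \<Sum>j<(2::nat). A (i, j) * A' (i, nat ((int j + (int b' - int b)) mod int 2)))"
  proof (rule sum.cong[OF refl])
    fix i
    show "(\<Sum>j<(2::nat). ?f (i, j)) = (\<Sum>j<(2::nat). A (i, j) * A' (i, nat ((int j + (int b' - int b)) mod int 2)))"
      using b b' by (cases b; cases b') (auto simp: numeral_2_eq_2 algebra_simps)
  qed
  finally show ?thesis unfolding corr_def .
qed

lemma sg_blk:
  assumes "snd p < 2" "b < 2"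
  shows "sg p \<in> blk u A b \<longleftrightarrow> p \<in> blk u A (1 - b)"
  using assms unfolding blk_def sg_def
  by (cases p) (auto simp: less_2_cases_iff mod_Suc)

lemma sg_sg: "snd p < 2 \<Longrightarrow> sg (sg p) = p"
  unfolding sg_def by (cases p) (auto simp: less_2_cases_iff)

lemma sg_neq: "snd p < 2 \<Longrightarrow> sg p \<noteq> p"
  unfolding sg_def by (cases p) (auto simp: less_2_cases_iff)

lemma sg_lt: "snd (sg p) < 2" "fst (sg p) = fst p"
  unfolding sg_def by auto




lemma zo_finite: "finite (zo_matrices u v)"
proof -
  let ?G = "{..<u} \<times> {..<v}"
  have "zo_matrices u v \<subseteq> (\<lambda>S p. if p \<in> S then 1 else 0) ` Pow ?G"
  proof
    fix A assume A: "A \<in> zo_matrices u v"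
    have "A = (\<lambda>p. if p \<in> {p\<in>?G. A p = 1} then 1 else 0)"
    proof
      fix p show "A p = (if p \<in> {p\<in>?G. A p = 1} then 1 else 0)"
        using A unfolding zo_matrices_def by (cases p) auto
    qed
    then show "A \<in> (\<lambda>S p. if p \<in> S then 1 else 0) ` Pow ?G" by blast
  qed
  moreover have "finite ((\<lambda>S p. if p \<in> S then (1::nat) else 0) ` Pow ?G)" by simp
  ultimately show ?thesis using finite_subset by blast
qed

lemma ooc_bound:
  fixes u P :: nat
  assumes ooc: "is_2D_OOC u 2 4 2 C"
    and T: "(2*u) choose 3 = 4*P" and oP: "odd P" and d3: "3 dvd ((2*u-1) choose 2)" and d4: "4 dvd (2*u-2)"
  shows "8 * card C + 8 \<le> 4 * P"
proof -
  have Csub: "C \<subseteq> zo_matrices u 2" and hw: "\<And>A. A \<in> C \<Longrightarrow> hamming_weight u 2 A = 4"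
    and cr: "\<And>A B r. A \<in> C \<Longrightarrow> B \<in> C \<Longrightarrow> A \<noteq> B \<or> r mod int 2 \<noteq> 0 \<Longrightarrow> corr u 2 A B r \<le> 2"
    using ooc unfolding is_2D_OOC_def by auto
  have fC: "finite C" using Csub zo_finite finite_subset by blast
  define G where "G = {..<u} \<times> {..<2::nat}"
  define I where "I = C \<times> {0::nat, 1}"
  define Bk where "Bk = (\<lambda>q. blk u (fst q) (snd q))"
  have fG: "finite G" unfolding G_def by simp
  have fI: "finite I" unfolding I_def using fC by simp
  have cG: "card G = 2*u" unfolding G_def by simp
  have cI: "card I = 2 * card C" unfolding I_def using fC by (simp add: card_cartesian_product)
  have BkP: "Bk q \<subseteq> G \<and> card (Bk q) = 4" if qI: "q \<in> I" for q
  proof -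
    obtain A b where q: "q = (A, b)" "A \<in> C" "b < 2" using qI unfolding I_def by (cases q) force
    have "Bk q \<subseteq> G" unfolding Bk_def G_def blk_def by auto
    moreover have "card (Bk q) = 4" unfolding Bk_def using q card_blk[of A u b] Csub hw by auto
    ultimately show ?thesis by simp
  qed
  have inter: "card (Bk q \<inter> Bk q') \<le> 2" if qI: "q \<in> I" "q' \<in> I" "q \<noteq> q'" for q q'
  proof -
    obtain A b where q: "q = (A, b)" "A \<in> C" "b < 2" using qI(1) unfolding I_def by (cases q) force
    obtain A' b' where q': "q' = (A', b')" "A' \<in> C" "b' < 2" using qI(2) unfolding I_def by (cases q') force
    have "card (Bk q \<inter> Bk q') = corr u 2 A A' (int b' - int b)"
      unfolding Bk_def using q q' Csub by (auto intro: card_blk_inter)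
    also have "\<dots> \<le> 2"
    proof (rule cr[OF q(2) q'(2)])
      show "A \<noteq> A' \<or> (int b' - int b) mod int 2 \<noteq> 0"
        using q q' qI(3) by (auto simp: less_2_cases_iff)
    qed
    finally show ?thesis .
  qed
  define L where "L = {t. t \<subseteq> G \<and> card t = 3} - (\<Union>i\<in>I. {t. t \<subseteq> Bk i \<and> card t = 3})"
  have cnt: "card {t\<in>L. Q \<subseteq> t} = ((card G - card Q) choose (3 - card Q)) - (4 - card Q) * card {i\<in>I. Q \<subseteq> Bk i}"
    and cle: "(4 - card Q) * card {i\<in>I. Q \<subseteq> Bk i} \<le> (card G - card Q) choose (3 - card Q)"
    if "Q \<subseteq> G" "card Q \<le> 2" for Q
    using core_count[OF fG fI BkP inter that] unfolding L_def by simp_all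
  have c0: "card L = ((2*u) choose 3) - 8 * card C" and le0: "8 * card C \<le> (2*u) choose 3"
    using cnt[of "{}"] cle[of "{}"] cG cI by simp_all
  show ?thesis
  proof (rule ccontr)
    assume "\<not> ?thesis"
    then have "card L = 4" using c0 le0 T oP by presburger
    show False
    proof (rule no4[of L sg])
      show "card L = 4" by fact
      have Lt: "t \<subseteq> G" "card t = 3" "\<And>q. q \<in> I \<Longrightarrow> \<not> t \<subseteq> Bk q" if "t \<in> L" for t
        using that unfolding L_def by auto
      show "card t = 3" if "t \<in> L" for t using Lt[OF that] by simp
      have snd2: "snd x < 2" if "t \<in> L" "x \<in> t" for t x using Lt(1)[OF that(1)] that(2) unfolding G_def by auto
      show "sg x \<noteq> x" if "t \<in> L" "x \<in> t" for t x using sg_neq snd2[OF that] by simp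
      show "sg (sg x) = x" if "t \<in> L" "x \<in> t" for t x using sg_sg snd2[OF that] by simp
      show "sg ` t \<in> L" if t: "t \<in> L" for t
      proof -
        have sG: "sg ` t \<subseteq> G" using Lt(1)[OF t] unfolding G_def sg_def by auto
        have "inj_on sg t"
        proof
          fix x y assume "x \<in> t" "y \<in> t" "sg x = sg y"
          then show "x = y" using sg_sg snd2[OF t] by metis
        qed
        then have c3: "card (sg ` t) = 3" using Lt(2)[OF t] by (simp add: card_image)
        have "\<not> sg ` t \<subseteq> Bk q" if q: "q \<in> I" for q
        proof
          assume s: "sg ` t \<subseteq> Bk q"
          obtain A b where qq: "q = (A, b)" "A \<in> C" "b < 2" using q unfolding I_def by (cases q) force
          have "t \<subseteq> Bk (A, 1 - b)"
          proof
            fix x assume x: "x \<in> t"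
            then have "sg x \<in> blk u A b" using s qq unfolding Bk_def by auto
            then show "x \<in> Bk (A, 1 - b)" using sg_blk[OF snd2[OF t x] qq(3)] unfolding Bk_def by simp
          qed
          moreover have "(A, 1 - b) \<in> I" using qq unfolding I_def by auto
          ultimately show False using Lt(3)[OF t, of "(A, 1 - b)"] by simp
        qed
        then show ?thesis using sG c3 unfolding L_def by simp
      qed
      show "3 dvd card {t' \<in> L. x \<in> t'}" if t: "t \<in> L" and x: "x \<in> t" for t x
      proof -
        have xG: "{x} \<subseteq> G" using Lt(1)[OF t] x by auto
        have "card {t' \<in> L. x \<in> t'} = ((2*u - 1) choose 2) - 3 * card {i\<in>I. {x} \<subseteq> Bk i}"
          using cnt[OF xG] cG by simp
        then show ?thesis using d3 by (simp add: dvd_diff_nat)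
      qed
      show "4 dvd card {t' \<in> L. {x, sg x} \<subseteq> t'}" if t: "t \<in> L" and x: "x \<in> t" and sx: "sg x \<in> t" for t x
      proof -
        let ?Q = "{x, sg x}"
        have QG: "?Q \<subseteq> G" using Lt(1)[OF t] x sx by auto
        have cQ: "card ?Q = 2" using sg_neq[OF snd2[OF t x]] by simp
        have eqv: "?Q \<subseteq> blk u A 1 \<longleftrightarrow> ?Q \<subseteq> blk u A 0" for A
          using sg_blk[OF snd2[OF t x], of 0 u A] sg_blk[OF snd2[OF t x], of 1 u A] by auto
        have "{i\<in>I. ?Q \<subseteq> Bk i} = {A\<in>C. ?Q \<subseteq> blk u A 0} \<times> {0, 1}"
        proof (rule set_eqI)
          fix q :: "(nat \<times> nat \<Rightarrow> nat) \<times> nat"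
          obtain A b where q: "q = (A, b)" by (cases q)
          show "q \<in> {i\<in>I. ?Q \<subseteq> Bk i} \<longleftrightarrow> q \<in> {A\<in>C. ?Q \<subseteq> blk u A 0} \<times> {0, 1}"
            unfolding q I_def Bk_def using eqv[of A] by (cases "b = 0") auto
        qed
        then have cJ: "card {i\<in>I. ?Q \<subseteq> Bk i} = 2 * card {A\<in>C. ?Q \<subseteq> blk u A 0}"
          using fC by (simp add: card_cartesian_product)
        have ceq: "card {t' \<in> L. ?Q \<subseteq> t'} = (2*u - 2) - 4 * card {A\<in>C. ?Q \<subseteq> blk u A 0}"
          using cnt[OF QG] cG cQ cJ by simp
        show ?thesis unfolding ceq by (rule dvd_diff_nat[OF d4]) simp
      qed
    qed
  qed
qed

theorem lemma5p6:
  fixes u :: nat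
  assumes "u mod 12 = 7 \<or> u mod 12 = 11"
  shows "int (Phi u 2 4 2) \<le>
    \<lfloor>real u / 4 * \<lfloor>(2 * real u - 1) / 3 * \<lfloor>(2 * real u - 2) / 2\<rfloor>\<rfloor>\<rfloor> - 1"
proof -
  obtain P where T: "(2*u) choose 3 = 4*P" and oP: "odd P" and d3: "3 dvd ((2*u-1) choose 2)"
    and d4: "4 dvd (2*u-2)"
    and e: "real u / 4 * \<lfloor>(2 * real u - 1) / 3 * \<lfloor>(2 * real u - 2) / 2\<rfloor>\<rfloor> = real P / 2"
    using arith_facts[OF assms] by blast
  let ?S = "{card C | C. is_2D_OOC u 2 4 2 C}"
  have bnd: "2 * n + 2 \<le> P" if "n \<in> ?S" for n
    using that ooc_bound[OF _ T oP d3 d4] by force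
  have "?S \<subseteq> {..P}" using bnd by fastforce
  then have fS: "finite ?S" using finite_subset by blast
  have "is_2D_OOC u 2 4 2 {}" unfolding is_2D_OOC_def by simp
  then have "card {} \<in> ?S" by (intro CollectI exI[of _ "{}"]) simp
  then have ne: "?S \<noteq> {}" by blast
  have "Phi u 2 4 2 \<in> ?S" unfolding Phi_def using Max_in[OF fS ne] .
  then have h: "2 * Phi u 2 4 2 + 2 \<le> P" by (rule bnd)
  have "int (Phi u 2 4 2) + 1 \<le> \<lfloor>real P / 2\<rfloor>"
    unfolding le_floor_iff using h by simp
  then show ?thesis unfolding e by simp
qed


end
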